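(* Let $\mu\in(0,1)$ and let $f$ satisfy $(f_1)$, $(f_2)$, $(f_3)$, $(f_5)$ as in the context. Then the function $a\mapsto m(a)$ is non-increasing on $(0,+\infty)$.
   Context: $I_\mu(x)=|x|^{-\mu}$; $f\in C(\mathbb{R},\mathbb{R})$, $F(t)=\int_0^tf(s)ds$; $\|(-\Delta)^{1/4}u\|_2^2=\frac1{2\pi}\int\int\frac{|u(x)-u(y)|^2}{|x-y|^2}dxdy$; $J(u)=\frac12\|(-\Delta)^{1/4}u\|_2^2-\frac12\int(I_\mu*F(u))F(u)dx$; $S(a)=\{u\in H^{1/2}(\mathbb{R}):\|u\|_2^2=a^2\}$; $P(u)=\|(-\Delta)^{1/4}u\|_2^2+(2-\mu)\int(I_\mu*F(u))F(u)dx-\int(I_\mu*F(u))f(u)u\,dx$; $\mathcal{P}(a)=\{u\in S(a):P(u)=0\}$; $m(a)=\inf_{u\in\mathcal{P}(a)}J(u)$. Conditions: $(f_1)$ $\lim_{t\to0}|f(t)|/|t|^\kappa=0$ for some $\kappa>2-\mu$; $(f_2)$ $\lim_{|t|\to\infty}|f(t)|e^{-\alpha t^2}=0$ for $\alpha>\pi$ and $=+\infty$ for $0<\alpha<\pi$; $(f_3)$ there is $\theta>3-\mu$ with $0<\theta F(t)\le tf(t)$ for $t\ne0$; $(f_5)$ with $\widetilde F(t)=f(t)t-(2-\mu)F(t)$, $\widetilde F(t)/|t|^{3-\mu}$ is non-increasing on $(-\infty,0)$ and non-decreasing on $(0,\infty)$. *)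

theory Defs
  imports "HOL-Analysis.Analysis"
begin

definition primF :: "(real \<Rightarrow> real) \<Rightarrow> real \<Rightarrow> real" where
  "primF f t = (LBINT s=0..t. f s)"

definition gagl_nn :: "(real \<Rightarrow> real) \<Rightarrow> ennreal" where
  "gagl_nn u = (\<integral>\<^sup>+ p. ennreal ((u (fst p) - u (snd p))\<^sup>2 / (fst p - snd p)\<^sup>2) \<partial>(lborel \<Otimes>\<^sub>M lborel))"

text \<open>||(-Delta)^{1/4} u||_2^2 = 1/(2 pi) int int |u x - u y|^2/|x-y|^2 dx dy\<close>
definition frac_seminorm_sq :: "(real \<Rightarrow> real) \<Rightarrow> real" where
  "frac_seminorm_sq u = (1 / (2 * pi)) *
     (\<integral> p. (u (fst p) - u (snd p))\<^sup>2 / (fst p - snd p)\<^sup>2 \<partial>(lborel \<Otimes>\<^sub>M lborel))"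

definition H_half :: "(real \<Rightarrow> real) set" where
  "H_half = {u. u \<in> borel_measurable lborel \<and> integrable lborel (\<lambda>x. (u x)\<^sup>2) \<and> gagl_nn u < \<infinity>}"

text \<open>int (I_mu * G(u)) H(u) dx = int int G(u y) H(u x) / |x-y|^mu dy dx\<close>
definition choq_term :: "real \<Rightarrow> (real \<Rightarrow> real) \<Rightarrow> (real \<Rightarrow> real) \<Rightarrow> real" where
  "choq_term \<mu> G H = (\<integral> p. G (snd p) * H (fst p) / \<bar>fst p - snd p\<bar> powr \<mu> \<partial>(lborel \<Otimes>\<^sub>M lborel))"

definition J_fun :: "real \<Rightarrow> (real \<Rightarrow> real) \<Rightarrow> (real \<Rightarrow> real) \<Rightarrow> real" where
  "J_fun \<mu> f u = frac_seminorm_sq u / 2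
      - choq_term \<mu> (\<lambda>x. primF f (u x)) (\<lambda>x. primF f (u x)) / 2"

definition P_fun :: "real \<Rightarrow> (real \<Rightarrow> real) \<Rightarrow> (real \<Rightarrow> real) \<Rightarrow> real" where
  "P_fun \<mu> f u = frac_seminorm_sq u
      + (2 - \<mu>) * choq_term \<mu> (\<lambda>x. primF f (u x)) (\<lambda>x. primF f (u x))
      - choq_term \<mu> (\<lambda>x. primF f (u x)) (\<lambda>x. f (u x) * u x)"

definition sphere_S :: "real \<Rightarrow> (real \<Rightarrow> real) set" where
  "sphere_S a = {u \<in> H_half. (LINT x|lborel. (u x)\<^sup>2) = a\<^sup>2}"

definition pohozaev_set :: "real \<Rightarrow> (real \<Rightarrow> real) \<Rightarrow> real \<Rightarrow> (real \<Rightarrow> real) set" where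
  "pohozaev_set \<mu> f a = {u \<in> sphere_S a. P_fun \<mu> f u = 0}"

text \<open>m(a) as an extended real infimum (Inf of empty set = +infinity).\<close>
definition m_level :: "real \<Rightarrow> (real \<Rightarrow> real) \<Rightarrow> real \<Rightarrow> ereal" where
  "m_level \<mu> f a = (INF u \<in> pohozaev_set \<mu> f a. ereal (J_fun \<mu> f u))"

end

theory Submission
  imports Defs
begin

lemma primF_deriv:
  assumes cont: "continuous_on UNIV f"
  shows "(primF f has_real_derivative f x) (at x)"
proof -
  define a where "a = min x 0 - 1"
  define b where "b = max x 0 + 1"
  have "((\<lambda>u. LBINT y=ereal 0..u. f y) has_vector_derivative (f x)) (at x within {a..b})"
    by (rule interval_integral_FTC2) (auto simp: a_def b_def intro: continuous_on_subset[OF cont])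
  then have "((\<lambda>u. LBINT y=0..u. f y) has_vector_derivative (f x)) (at x within {a..b})"
    by (simp add: zero_ereal_def)
  moreover have "x \<in> interior {a..b}" by (auto simp: a_def b_def)
  ultimately have "((\<lambda>u. LBINT y=0..u. f y) has_vector_derivative (f x)) (at x)"
    using at_within_interior by metis
  then show ?thesis unfolding primF_def[abs_def] has_real_derivative_iff_has_vector_derivative .
qed

lemma primF_cont: "continuous_on UNIV f \<Longrightarrow> continuous_on UNIV (primF f)"
  using primF_deriv by (meson DERIV_isCont continuous_at_imp_continuous_on)

definition Gf :: "real \<Rightarrow> (real \<Rightarrow> real) \<Rightarrow> real \<Rightarrow> real" where
  "Gf \<mu> f t = f t * t - (2 - \<mu>) * primF f t"

lemma primF_0[simp]: "primF f 0 = 0" by (simp add: primF_def zero_ereal_def)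

context
  fixes \<mu> \<theta> :: real and f :: "real \<Rightarrow> real"
  assumes mu: "0 < \<mu>" "\<mu> < 1"
    and cont: "continuous_on UNIV f"
    and th: "\<theta> > 3 - \<mu>"
    and f3: "\<forall>t. t \<noteq> 0 \<longrightarrow> 0 < \<theta> * primF f t \<and> \<theta> * primF f t \<le> t * f t"
    and f5n: "\<forall>s t. s < t \<and> t < 0 \<longrightarrow>
               (f t * t - (2 - \<mu>) * primF f t) / \<bar>t\<bar> powr (3 - \<mu>)
                 \<le> (f s * s - (2 - \<mu>) * primF f s) / \<bar>s\<bar> powr (3 - \<mu>)"
    and f5p: "\<forall>s t. 0 < s \<and> s < t \<longrightarrow>
               (f s * s - (2 - \<mu>) * primF f s) / \<bar>s\<bar> powr (3 - \<mu>)
                 \<le> (f t * t - (2 - \<mu>) * primF f t) / \<bar>t\<bar> powr (3 - \<mu>)"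
begin

lemma F_nonneg: "0 \<le> primF f t"
  using f3 th mu by (cases "t = 0") (auto simp: zero_less_mult_iff)

lemma F_pos: "t \<noteq> 0 \<Longrightarrow> 0 < primF f t"
  using f3 th mu by (auto simp: zero_less_mult_iff)

lemma tf_ge: "\<theta> * primF f t \<le> t * f t"
  using f3 by (cases "t = 0") auto

lemma G_nonneg: "0 \<le> f t * t - (2 - \<mu>) * primF f t"
proof -
  have "(2 - \<mu>) * primF f t \<le> \<theta> * primF f t"
    using th F_nonneg[of t] by (intro mult_right_mono) auto
  then show ?thesis using tf_ge[of t] by (simp add: mult.commute)
qed

lemma F_scale:
  assumes a: "0 < \<alpha>" "\<alpha> \<le> 1"
  shows "primF f (\<alpha> * t) \<le> \<alpha> powr \<theta> * primF f t"
proof -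
  define h where "h \<tau> = primF f (\<tau> * t) * \<tau> powr (- \<theta>)" for \<tau>
  have "h \<alpha> \<le> h 1"
  proof (rule DERIV_nonneg_imp_increasing_open[OF a(2)])
    fix x assume x: "\<alpha> < x" "x < 1"
    then have xp: "0 < x" using a by auto
    have "(h has_real_derivative (f (x * t) * t * x powr (- \<theta>) + primF f (x * t) * ((- \<theta>) * x powr (- \<theta> - 1)))) (at x)"
      unfolding h_def[abs_def]
      apply (rule derivative_eq_intros DERIV_chain2[OF primF_deriv[OF cont]] | use xp in simp)+
      done
    moreover have "0 \<le> f (x * t) * t * x powr (- \<theta>) + primF f (x * t) * ((- \<theta>) * x powr (- \<theta> - 1))"
    proof -
      have "x powr (- \<theta>) = x powr (1 + (- \<theta> - 1))" by simp
      also have "\<dots> = x * x powr (- \<theta> - 1)" using xp by (simp only: powr_add) simp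
      finally have "x powr (- \<theta>) = x * x powr (- \<theta> - 1)" .
      then have "f (x * t) * t * x powr (- \<theta>) + primF f (x * t) * ((- \<theta>) * x powr (- \<theta> - 1))
          = x powr (- \<theta> - 1) * ((x * t) * f (x * t) - \<theta> * primF f (x * t))"
        by (simp add: algebra_simps)
      also have "\<dots> \<ge> 0" using tf_ge[of "x * t"] by simp
      finally show ?thesis .
    qed
    ultimately show "\<exists>y. (h has_real_derivative y) (at x) \<and> 0 \<le> y" by blast
  next
    show "continuous_on {\<alpha>..1} h" unfolding h_def
      using a
      by (intro continuous_intros continuous_on_compose2[OF primF_cont[OF cont]]) auto
  qed
  then have "primF f (\<alpha> * t) * \<alpha> powr (- \<theta>) \<le> primF f t" by (simp add: h_def)
  then have "primF f (\<alpha> * t) * \<alpha> powr (- \<theta>) * \<alpha> powr \<theta> \<le> primF f t * \<alpha> powr \<theta>"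
    by (intro mult_right_mono) auto
  then show ?thesis using a by (simp add: powr_minus field_simps)
qed

lemma Gf_nonneg: "0 \<le> Gf \<mu> f t"
  using G_nonneg by (simp add: Gf_def)

lemma G_scale:
  assumes a: "0 < \<alpha>" "\<alpha> \<le> 1"
  shows "Gf \<mu> f (\<alpha> * t) \<le> \<alpha> powr (3 - \<mu>) * Gf \<mu> f t"
proof (cases "t = 0 \<or> \<alpha> = 1")
  case True then show ?thesis by (auto simp: Gf_def)
next
  case False
  then have a1: "\<alpha> < 1" and t0: "t \<noteq> 0" using a by auto
  have key: "Gf \<mu> f (\<alpha> * t) / \<bar>\<alpha> * t\<bar> powr (3 - \<mu>) \<le> Gf \<mu> f t / \<bar>t\<bar> powr (3 - \<mu>)"
  proof (cases "t > 0")
    case True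
    then have "\<alpha> * t < t" "0 < \<alpha> * t" using a a1 by auto
    then show ?thesis using f5p unfolding Gf_def by blast
  next
    case False
    then have "t < \<alpha> * t" "\<alpha> * t < 0" using a a1 t0 by (auto simp: mult_less_0_iff)
    then show ?thesis using f5n unfolding Gf_def by blast
  qed
  have pos: "0 < \<bar>t\<bar> powr (3 - \<mu>)" using t0 by simp
  have "\<bar>\<alpha> * t\<bar> powr (3 - \<mu>) = \<alpha> powr (3 - \<mu>) * \<bar>t\<bar> powr (3 - \<mu>)"
    using a by (simp add: abs_mult powr_mult)
  with key pos a show ?thesis
    by (simp add: divide_le_eq field_simps)
qed

lemma F_scale': 
  assumes a: "0 < \<alpha>" "\<alpha> \<le> 1"
  shows "primF f (\<alpha> * t) \<le> \<alpha> powr (3 - \<mu>) * primF f t"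
proof -
  have "\<alpha> powr \<theta> \<le> \<alpha> powr (3 - \<mu>)" using a th by (intro powr_mono') auto
  then have "\<alpha> powr \<theta> * primF f t \<le> \<alpha> powr (3 - \<mu>) * primF f t"
    using F_nonneg by (intro mult_right_mono) auto
  then show ?thesis using F_scale[OF a, of t] by linarith
qed

lemma key_pointwise:
  assumes a: "0 < \<alpha>" "\<alpha> \<le> 1"
  shows "0 \<le> \<alpha> powr (2 * \<mu> - 4) * (primF f (\<alpha> * t1) * primF f (\<alpha> * t2)) - primF f t1 * primF f t2
     + (1 - \<alpha>\<^sup>2) / 2 * (Gf \<mu> f t1 * primF f t2 + primF f t1 * Gf \<mu> f t2)"
proof -
  define c where "c = Gf \<mu> f t1 * primF f t2 + primF f t1 * Gf \<mu> f t2"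
  define L where "L \<tau> = \<tau> powr (2 * \<mu> - 4) * (primF f (\<tau> * t1) * primF f (\<tau> * t2)) - \<tau>\<^sup>2 / 2 * c" for \<tau>
  have "L \<alpha> \<ge> L 1"
  proof (rule DERIV_nonpos_imp_decreasing_open[OF a(2)])
    fix x assume x: "\<alpha> < x" "x < 1"
    then have xp: "0 < x" using a by auto
    define D where "D = (2 * \<mu> - 4) * x powr (2 * \<mu> - 4 - 1) * (primF f (x * t1) * primF f (x * t2))
        + x powr (2 * \<mu> - 4) * (f (x * t1) * t1 * primF f (x * t2) + primF f (x * t1) * (f (x * t2) * t2))
        - x * c"
    have "(L has_real_derivative D) (at x)"
      unfolding L_def[abs_def] D_def
      by (rule derivative_eq_intros DERIV_chain2[OF primF_deriv[OF cont]] | use xp in simp)+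
    moreover have "D \<le> 0"
    proof -
      have e1: "x powr (2 * \<mu> - 4) = x * x powr (2 * \<mu> - 5)"
      proof -
        have "x powr (2 * \<mu> - 4) = x powr (1 + (2 * \<mu> - 5))" by simp
        also have "\<dots> = x * x powr (2 * \<mu> - 5)" using xp by (simp only: powr_add) simp
        finally show ?thesis .
      qed
      have "D = x powr (2 * \<mu> - 5) * (Gf \<mu> f (x * t1) * primF f (x * t2) + primF f (x * t1) * Gf \<mu> f (x * t2)) - x * c"
        unfolding D_def e1 Gf_def by (simp add: algebra_simps)
      moreover have "Gf \<mu> f (x * t1) * primF f (x * t2) + primF f (x * t1) * Gf \<mu> f (x * t2)
          \<le> x powr (3 - \<mu>) * x powr (3 - \<mu>) * c"
      proof -
        have x1: "0 < x" "x \<le> 1" using xp x by auto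
        have "Gf \<mu> f (x * t1) * primF f (x * t2) \<le> (x powr (3 - \<mu>) * Gf \<mu> f t1) * (x powr (3 - \<mu>) * primF f t2)"
          by (intro mult_mono G_scale[OF x1] F_scale'[OF x1] Gf_nonneg F_nonneg) (auto intro: mult_nonneg_nonneg Gf_nonneg)
        moreover have "primF f (x * t1) * Gf \<mu> f (x * t2) \<le> (x powr (3 - \<mu>) * primF f t1) * (x powr (3 - \<mu>) * Gf \<mu> f t2)"
          by (intro mult_mono G_scale[OF x1] F_scale'[OF x1] Gf_nonneg F_nonneg) (auto intro: mult_nonneg_nonneg F_nonneg)
        ultimately show ?thesis unfolding c_def by (simp add: algebra_simps)
      qed
      moreover have "x powr (2 * \<mu> - 5) * (x powr (3 - \<mu>) * x powr (3 - \<mu>) * c) = x * c"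
      proof -
        have "x powr (2 * \<mu> - 5) * x powr (3 - \<mu>) * x powr (3 - \<mu>) = x powr ((2 * \<mu> - 5) + (3 - \<mu>) + (3 - \<mu>))"
          using xp by (simp only: powr_add)
        also have "\<dots> = x" using xp by simp
        finally show ?thesis using xp by (simp add: mult.assoc[symmetric])
      qed
      ultimately show ?thesis
        by (smt (verit) mult_left_mono powr_ge_zero)
    qed
    ultimately show "\<exists>y. (L has_real_derivative y) (at x) \<and> y \<le> 0" by blast
  next
    show "continuous_on {\<alpha>..1} L" unfolding L_def
      using a
      by (intro continuous_intros continuous_on_compose2[OF primF_cont[OF cont]]) auto
  qed
  then show ?thesis unfolding L_def c_def by (simp add: algebra_simps add_divide_distrib diff_divide_distrib)
qed

end


lemma lborel2_scale:
  fixes \<beta> :: real assumes "\<beta> \<noteq> 0"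
  shows "(lborel :: (real\<times>real) measure) = density (distr lborel borel (\<lambda>x. \<beta> *\<^sub>R x)) (\<lambda>_. ennreal (\<beta>\<^sup>2))"
  using lborel_affine[OF assms, of "0::real\<times>real"] by (simp add: power2_eq_square)

lemma nn_scale2:
  fixes \<beta> :: real and g :: "real\<times>real \<Rightarrow> ennreal"
  assumes b: "\<beta> \<noteq> 0" and [measurable]: "g \<in> borel_measurable borel"
  shows "(\<integral>\<^sup>+p. g p \<partial>(lborel \<Otimes>\<^sub>M lborel)) = ennreal (\<beta>\<^sup>2) * (\<integral>\<^sup>+p. g (\<beta> * fst p, \<beta> * snd p) \<partial>(lborel \<Otimes>\<^sub>M lborel))"
proof -
  have "(\<integral>\<^sup>+p. g p \<partial>(lborel \<Otimes>\<^sub>M lborel)) = (\<integral>\<^sup>+p. g p \<partial>lborel)" by (simp add: lborel_prod)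
  also have "\<dots> = ennreal (\<beta>\<^sup>2) * (\<integral>\<^sup>+p. g (\<beta> *\<^sub>R p) \<partial>lborel)"
    by (subst lborel2_scale[OF b]) (simp add: nn_integral_density nn_integral_distr nn_integral_cmult)
  also have "\<dots> = ennreal (\<beta>\<^sup>2) * (\<integral>\<^sup>+p. g (\<beta> * fst p, \<beta> * snd p) \<partial>(lborel \<Otimes>\<^sub>M lborel))"
    by (simp add: lborel_prod scaleR_prod_def case_prod_beta)
  finally show ?thesis .
qed

lemma int_scale2:
  fixes \<beta> :: real and g :: "real\<times>real \<Rightarrow> real"
  assumes b: "\<beta> \<noteq> 0" and [measurable]: "g \<in> borel_measurable borel"
  shows "(\<integral>p. g p \<partial>(lborel \<Otimes>\<^sub>M lborel)) = \<beta>\<^sup>2 * (\<integral>p. g (\<beta> * fst p, \<beta> * snd p) \<partial>(lborel \<Otimes>\<^sub>M lborel))"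
proof -
  have "(\<integral>p. g p \<partial>(lborel \<Otimes>\<^sub>M lborel)) = (\<integral>p. g p \<partial>lborel)" by (simp add: lborel_prod)
  also have "\<dots> = (\<integral>p. g p \<partial>(density (distr lborel borel (\<lambda>x. \<beta> *\<^sub>R x)) (\<lambda>_. ennreal (\<beta>\<^sup>2))))"
    using lborel2_scale[OF b] by simp
  also have "\<dots> = \<beta>\<^sup>2 * (\<integral>p. g (\<beta> *\<^sub>R p) \<partial>lborel)"
    by (subst integral_density) (auto simp: integral_distr)
  also have "\<dots> = \<beta>\<^sup>2 * (\<integral>p. g (\<beta> * fst p, \<beta> * snd p) \<partial>(lborel \<Otimes>\<^sub>M lborel))"
    by (simp add: lborel_prod scaleR_prod_def case_prod_beta)
  finally show ?thesis .
qed

lemma meas_borel2: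
  fixes g :: "real \<times> real \<Rightarrow> real"
  shows "g \<in> borel_measurable (lborel \<Otimes>\<^sub>M lborel) \<Longrightarrow> g \<in> borel_measurable borel"
  by (simp add: lborel_prod)

lemma meas_borel2':
  fixes g :: "real \<times> real \<Rightarrow> ennreal"
  shows "g \<in> borel_measurable (lborel \<Otimes>\<^sub>M lborel) \<Longrightarrow> g \<in> borel_measurable borel"
  by (simp add: lborel_prod)

lemma choq_scale:
  fixes \<beta> :: real
  assumes b: "0 < \<beta>" and [measurable]: "A \<in> borel_measurable borel" "B \<in> borel_measurable borel"
  shows "choq_term \<mu> (\<lambda>x. A (\<beta> * x)) (\<lambda>x. B (\<beta> * x)) = \<beta> powr (\<mu> - 2) * choq_term \<mu> A B"
proof -
  have [measurable]: "(\<lambda>p. A (snd p) * B (fst p) / \<bar>fst p - snd p\<bar> powr \<mu>) \<in> borel_measurable borel"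
    by (rule meas_borel2) measurable
  have "choq_term \<mu> A B = \<beta>\<^sup>2 * (\<integral>p. A (\<beta> * snd p) * B (\<beta> * fst p) / \<bar>\<beta> * fst p - \<beta> * snd p\<bar> powr \<mu> \<partial>(lborel \<Otimes>\<^sub>M lborel))"
    unfolding choq_term_def by (subst int_scale2[of \<beta>]) (use b in auto)
  also have "(\<lambda>p. A (\<beta> * snd p) * B (\<beta> * fst p) / \<bar>\<beta> * fst p - \<beta> * snd p\<bar> powr \<mu>)
     = (\<lambda>p. \<beta> powr (- \<mu>) * (A (\<beta> * snd p) * B (\<beta> * fst p) / \<bar>fst p - snd p\<bar> powr \<mu>))"
  proof
    fix p :: "real \<times> real"
    have "\<bar>\<beta> * fst p - \<beta> * snd p\<bar> powr \<mu> = \<beta> powr \<mu> * \<bar>fst p - snd p\<bar> powr \<mu>"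
      using b by (simp add: right_diff_distrib[symmetric] abs_mult powr_mult)
    then show "A (\<beta> * snd p) * B (\<beta> * fst p) / \<bar>\<beta> * fst p - \<beta> * snd p\<bar> powr \<mu>
      = \<beta> powr (- \<mu>) * (A (\<beta> * snd p) * B (\<beta> * fst p) / \<bar>fst p - snd p\<bar> powr \<mu>)"
      using b by (simp add: powr_minus field_simps)
  qed
  finally have "choq_term \<mu> A B = \<beta>\<^sup>2 * \<beta> powr (- \<mu>) * choq_term \<mu> (\<lambda>x. A (\<beta> * x)) (\<lambda>x. B (\<beta> * x))"
    unfolding choq_term_def by (simp only: integral_mult_right_zero mult.assoc)
  moreover have "\<beta> powr (\<mu> - 2) * (\<beta>\<^sup>2 * \<beta> powr (- \<mu>)) = 1"
  proof -
    have "\<beta>\<^sup>2 = \<beta> powr 2" using b by (simp add: powr_numeral)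
    then have "\<beta> powr (\<mu> - 2) * (\<beta>\<^sup>2 * \<beta> powr (- \<mu>)) = \<beta> powr ((\<mu> - 2) + 2 + (- \<mu>))"
      using b by (simp only: powr_add)
    then show ?thesis using b by simp
  qed
  ultimately show ?thesis by (metis mult.assoc mult_1)
qed

lemma frac_scale:
  fixes \<beta> :: real
  assumes b: "0 < \<beta>" and [measurable]: "u \<in> borel_measurable borel"
  shows "frac_seminorm_sq (\<lambda>x. \<alpha> * u (\<beta> * x)) = \<alpha>\<^sup>2 * frac_seminorm_sq u"
proof -
  have [measurable]: "(\<lambda>p. (u (fst p) - u (snd p))\<^sup>2 / (fst p - snd p)\<^sup>2) \<in> borel_measurable borel"
    by (rule meas_borel2) measurable
  have "(\<integral>p. (u (fst p) - u (snd p))\<^sup>2 / (fst p - snd p)\<^sup>2 \<partial>(lborel \<Otimes>\<^sub>M lborel))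
    = \<beta>\<^sup>2 * (\<integral>p. (u (\<beta> * fst p) - u (\<beta> * snd p))\<^sup>2 / (\<beta> * fst p - \<beta> * snd p)\<^sup>2 \<partial>(lborel \<Otimes>\<^sub>M lborel))"
    by (subst int_scale2[of \<beta>]) (use b in auto)
  also have "(\<lambda>p. (u (\<beta> * fst p) - u (\<beta> * snd p))\<^sup>2 / (\<beta> * fst p - \<beta> * snd p)\<^sup>2)
     = (\<lambda>p. (1 / \<beta>\<^sup>2) * ((u (\<beta> * fst p) - u (\<beta> * snd p))\<^sup>2 / (fst p - snd p)\<^sup>2))"
    using b by (auto simp: right_diff_distrib[symmetric] power_mult_distrib)
  also have "\<beta>\<^sup>2 * (\<integral>p. (1 / \<beta>\<^sup>2) * ((u (\<beta> * fst p) - u (\<beta> * snd p))\<^sup>2 / (fst p - snd p)\<^sup>2) \<partial>(lborel \<Otimes>\<^sub>M lborel))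
      = (\<integral>p. ((u (\<beta> * fst p) - u (\<beta> * snd p))\<^sup>2 / (fst p - snd p)\<^sup>2) \<partial>(lborel \<Otimes>\<^sub>M lborel))"
    using b by (simp only: integral_mult_right_zero) simp
  finally have eq1: "(\<integral>p. (u (fst p) - u (snd p))\<^sup>2 / (fst p - snd p)\<^sup>2 \<partial>(lborel \<Otimes>\<^sub>M lborel))
      = (\<integral>p. ((u (\<beta> * fst p) - u (\<beta> * snd p))\<^sup>2 / (fst p - snd p)\<^sup>2) \<partial>(lborel \<Otimes>\<^sub>M lborel))" .
  have eq2: "(\<lambda>p. (\<alpha> * u (\<beta> * fst p) - \<alpha> * u (\<beta> * snd p))\<^sup>2 / (fst p - snd p)\<^sup>2)
     = (\<lambda>p. \<alpha>\<^sup>2 * ((u (\<beta> * fst p) - u (\<beta> * snd p))\<^sup>2 / (fst p - snd p)\<^sup>2))"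
    by (auto simp: right_diff_distrib[symmetric] power_mult_distrib)
  show ?thesis unfolding frac_seminorm_sq_def eq1 eq2 integral_mult_right_zero by simp
qed

lemma gagl_scale:
  fixes \<beta> :: real
  assumes b: "0 < \<beta>" and [measurable]: "u \<in> borel_measurable borel"
  shows "gagl_nn (\<lambda>x. \<alpha> * u (\<beta> * x)) = ennreal (\<alpha>\<^sup>2) * gagl_nn u"
proof -
  have [measurable]: "(\<lambda>p. (u (fst p) - u (snd p))\<^sup>2 / (fst p - snd p)\<^sup>2) \<in> borel_measurable borel"
    by (rule meas_borel2) measurable
  have [measurable]: "(\<lambda>p. ennreal ((u (fst p) - u (snd p))\<^sup>2 / (fst p - snd p)\<^sup>2)) \<in> borel_measurable borel"
    by (rule meas_borel2') measurable
  have "gagl_nn u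
    = ennreal (\<beta>\<^sup>2) * (\<integral>\<^sup>+p. ennreal ((u (\<beta> * fst p) - u (\<beta> * snd p))\<^sup>2 / (\<beta> * fst p - \<beta> * snd p)\<^sup>2) \<partial>(lborel \<Otimes>\<^sub>M lborel))"
    unfolding gagl_nn_def by (subst nn_scale2[of \<beta>]) (use b in auto)
  also have "(\<lambda>p. ennreal ((u (\<beta> * fst p) - u (\<beta> * snd p))\<^sup>2 / (\<beta> * fst p - \<beta> * snd p)\<^sup>2))
     = (\<lambda>p. ennreal (1 / \<beta>\<^sup>2) * ennreal ((u (\<beta> * fst p) - u (\<beta> * snd p))\<^sup>2 / (fst p - snd p)\<^sup>2))"
    using b by (auto simp: right_diff_distrib[symmetric] power_mult_distrib ennreal_mult[symmetric])
  finally have "gagl_nn u = ennreal (\<beta>\<^sup>2) * (ennreal (1 / \<beta>\<^sup>2) * (\<integral>\<^sup>+p. ennreal ((u (\<beta> * fst p) - u (\<beta> * snd p))\<^sup>2 / (fst p - snd p)\<^sup>2) \<partial>(lborel \<Otimes>\<^sub>M lborel)))"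
    by (simp add: nn_integral_cmult)
  also have "\<dots> = (\<integral>\<^sup>+p. ennreal ((u (\<beta> * fst p) - u (\<beta> * snd p))\<^sup>2 / (fst p - snd p)\<^sup>2) \<partial>(lborel \<Otimes>\<^sub>M lborel))"
    using b by (simp add: mult.assoc[symmetric] ennreal_mult[symmetric])
  finally have eq: "gagl_nn u = \<dots>" .
  have "(\<lambda>p. ennreal ((\<alpha> * u (\<beta> * fst p) - \<alpha> * u (\<beta> * snd p))\<^sup>2 / (fst p - snd p)\<^sup>2))
     = (\<lambda>p. ennreal (\<alpha>\<^sup>2) * ennreal ((u (\<beta> * fst p) - u (\<beta> * snd p))\<^sup>2 / (fst p - snd p)\<^sup>2))"
    by (auto simp: right_diff_distrib[symmetric] power_mult_distrib ennreal_mult[symmetric])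
  then show ?thesis unfolding gagl_nn_def eq[unfolded gagl_nn_def] by (simp add: nn_integral_cmult)
qed



lemma AE_ex_lborel:
  assumes "AE x in (lborel :: real measure). Q x" shows "\<exists>x. Q x"
proof (rule ccontr)
  assume "\<not> (\<exists>x. Q x)"
  then have "{x \<in> space lborel. \<not> Q x} = (UNIV :: real set)" by auto
  with AE_E2[OF assms] show False by simp
qed

lemma const_integrable_lborel:
  assumes "integrable (lborel :: real measure) (\<lambda>_. c::real)" shows "c = 0"
proof (rule ccontr)
  assume c: "c \<noteq> 0"
  from assms have "(\<integral>\<^sup>+x. ennreal (norm c) \<partial>(lborel :: real measure)) < \<infinity>"
    unfolding integrable_iff_bounded by simp
  moreover have "(\<integral>\<^sup>+x. ennreal (norm c) \<partial>(lborel :: real measure)) = \<infinity>"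
    using c by (simp add: nn_integral_const ennreal_mult_top)
  ultimately show False by simp
qed

lemma frac_pos:
  assumes u: "u \<in> H_half" and L2: "(LINT x|lborel. (u x)\<^sup>2) = a\<^sup>2" and a: "a > 0"
  shows "frac_seminorm_sq u > 0"
proof -
  have [measurable]: "u \<in> borel_measurable borel" using u by (simp add: H_half_def)
  have iu: "integrable lborel (\<lambda>x. (u x)\<^sup>2)" using u by (simp add: H_half_def)
  define h where "h p = (u (fst p) - u (snd p))\<^sup>2 / (fst p - snd p)\<^sup>2" for p :: "real \<times> real"
  have [measurable]: "h \<in> borel_measurable (lborel \<Otimes>\<^sub>M lborel)" unfolding h_def by measurable
  have hnn: "0 \<le> h p" for p unfolding h_def by simp
  have ih: "integrable (lborel \<Otimes>\<^sub>M lborel) h"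
  proof (rule integrableI_nonneg)
    show "AE x in lborel \<Otimes>\<^sub>M lborel. 0 \<le> h x" using hnn by simp
    show "(\<integral>\<^sup>+ x. ennreal (h x) \<partial>(lborel \<Otimes>\<^sub>M lborel)) < \<infinity>"
      using u unfolding H_half_def gagl_nn_def h_def by simp
  qed simp
  have "frac_seminorm_sq u = (1 / (2 * pi)) * integral\<^sup>L (lborel \<Otimes>\<^sub>M lborel) h"
    unfolding frac_seminorm_sq_def h_def ..
  moreover have "integral\<^sup>L (lborel \<Otimes>\<^sub>M lborel) h \<noteq> 0"
  proof
    assume "integral\<^sup>L (lborel \<Otimes>\<^sub>M lborel) h = 0"
    then have ae0: "AE p in lborel \<Otimes>\<^sub>M lborel. h p = 0"
      using integral_nonneg_eq_0_iff_AE[OF ih] hnn by simp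
    have ne1: "AE y in lborel. x \<noteq> y" for x :: real
      using AE_lborel_singleton[of x] by eventually_elim auto
    have ne: "AE x in lborel. AE y in lborel. fst (x::real, y::real) \<noteq> snd (x, y)"
      using ne1 by simp
    have aed: "AE p in lborel \<Otimes>\<^sub>M lborel. fst (p::real\<times>real) \<noteq> snd p"
      by (rule lborel_pair.AE_pair_measure[where P="\<lambda>p. fst p \<noteq> snd p", OF _ ne]) measurable
    have "AE p in lborel \<Otimes>\<^sub>M lborel. u (fst p) = u (snd p)"
      using ae0 aed by eventually_elim (auto simp: h_def)
    then have "AE x in lborel. AE y in lborel. u x = u y"
      using lborel_pair.AE_pair by fastforce
    then obtain x0 where x0: "AE y in lborel. u x0 = u y" using AE_ex_lborel by blast
    have "integrable lborel (\<lambda>y::real. (u x0)\<^sup>2)"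
      by (rule integrable_cong_AE_imp[OF iu]) (use x0 in \<open>auto elim: AE_mp\<close>)
    then have "(u x0)\<^sup>2 = 0" by (rule const_integrable_lborel)
    then have u0: "u x0 = 0" by simp
    have "AE y in lborel. (u y)\<^sup>2 = 0" using x0 by eventually_elim (simp add: u0)
    then have "(LINT x|lborel. (u x)\<^sup>2) = (LINT x::real|lborel. 0::real)"
      by (intro integral_cong_AE) auto
    then have "(LINT x|lborel. (u x)\<^sup>2) = 0" by simp
    with L2 a show False by simp
  qed
  moreover have "integral\<^sup>L (lborel \<Otimes>\<^sub>M lborel) h \<ge> 0" using hnn by (simp add: integral_nonneg_AE)
  ultimately show ?thesis by simp
qed

lemma cont_param_int:
  fixes h :: "real \<Rightarrow> 'a \<Rightarrow> real"
  assumes meas: "\<And>\<alpha>. \<alpha> \<in> S \<Longrightarrow> h \<alpha> \<in> borel_measurable M" and w: "integrable M w"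
    and bnd: "\<And>\<alpha> x. \<alpha> \<in> S \<Longrightarrow> x \<in> space M \<Longrightarrow> \<bar>h \<alpha> x\<bar> \<le> w x"
    and cont: "\<And>x. x \<in> space M \<Longrightarrow> continuous_on S (\<lambda>\<alpha>. h \<alpha> x)"
  shows "continuous_on S (\<lambda>\<alpha>. integral\<^sup>L M (h \<alpha>))"
proof (rule continuous_on_sequentiallyI)
  fix X :: "nat \<Rightarrow> real" and a assume X: "\<forall>n. X n \<in> S" "a \<in> S" "X \<longlonglongrightarrow> a"
  show "(\<lambda>n. integral\<^sup>L M (h (X n))) \<longlonglongrightarrow> integral\<^sup>L M (h a)"
  proof (rule integral_dominated_convergence[where w=w])
    show "h a \<in> borel_measurable M" using meas X by auto
    show "\<And>n. h (X n) \<in> borel_measurable M" using meas X by auto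
    show "integrable M w" by fact
    show "AE x in M. (\<lambda>n. h (X n) x) \<longlonglongrightarrow> h a x"
    proof (rule AE_I2)
      fix x assume "x \<in> space M"
      then have "continuous_on S (\<lambda>\<alpha>. h \<alpha> x)" by (rule cont)
      then show "(\<lambda>n. h (X n) x) \<longlonglongrightarrow> h a x"
        using X unfolding continuous_on_sequentially by (auto simp: o_def)
    qed
    show "\<And>n. AE x in M. norm (h (X n) x) \<le> w x"
      using bnd X by auto
  qed
qed



context
  fixes \<mu> \<theta> :: real and f :: "real \<Rightarrow> real"
  assumes mu: "0 < \<mu>" "\<mu> < 1"
    and cont: "continuous_on UNIV f"
    and th: "\<theta> > 3 - \<mu>"
    and f3: "\<forall>t. t \<noteq> 0 \<longrightarrow> 0 < \<theta> * primF f t \<and> \<theta> * primF f t \<le> t * f t"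
    and f5n: "\<forall>s t. s < t \<and> t < 0 \<longrightarrow>
               (f t * t - (2 - \<mu>) * primF f t) / \<bar>t\<bar> powr (3 - \<mu>)
                 \<le> (f s * s - (2 - \<mu>) * primF f s) / \<bar>s\<bar> powr (3 - \<mu>)"
    and f5p: "\<forall>s t. 0 < s \<and> s < t \<longrightarrow>
               (f s * s - (2 - \<mu>) * primF f s) / \<bar>s\<bar> powr (3 - \<mu>)
                 \<le> (f t * t - (2 - \<mu>) * primF f t) / \<bar>t\<bar> powr (3 - \<mu>)"
begin

lemmas hyps = mu cont th f3 f5n f5p

lemma Fn: "0 \<le> primF f t" by (rule F_nonneg[OF hyps])
lemma Gn: "0 \<le> Gf \<mu> f t" by (rule Gf_nonneg[OF hyps])
lemma tfn: "0 \<le> f t * t"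
proof -
  have "0 \<le> \<theta> * primF f t" using th mu Fn[of t] by simp
  then show ?thesis using tf_ge[OF hyps, of t] by (simp add: mult.commute)
qed
lemma F_le_tf: "primF f t \<le> f t * t / \<theta>"
  using tf_ge[OF hyps, of t] th mu by (simp add: field_simps mult.commute)
lemma G_le_tf: "Gf \<mu> f t \<le> f t * t"
  using Fn[of t] mu by (simp add: Gf_def)
lemma F_mono1: "0 < \<alpha> \<Longrightarrow> \<alpha> \<le> 1 \<Longrightarrow> primF f (\<alpha> * t) \<le> primF f t"
proof -
  assume a: "0 < \<alpha>" "\<alpha> \<le> 1"
  have "\<alpha> powr (3 - \<mu>) \<le> 1" using a mu by (intro powr_le1) auto
  then have "\<alpha> powr (3 - \<mu>) * primF f t \<le> primF f t" using Fn[of t] by (simp add: mult_left_le_one_le)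
  then show ?thesis using F_scale'[OF hyps a, of t] by linarith
qed
lemma G_mono1: "0 < \<alpha> \<Longrightarrow> \<alpha> \<le> 1 \<Longrightarrow> Gf \<mu> f (\<alpha> * t) \<le> Gf \<mu> f t"
proof -
  assume a: "0 < \<alpha>" "\<alpha> \<le> 1"
  have "\<alpha> powr (3 - \<mu>) \<le> 1" using a mu by (intro powr_le1) auto
  then have "\<alpha> powr (3 - \<mu>) * Gf \<mu> f t \<le> Gf \<mu> f t" using Gn[of t] by (simp add: mult_left_le_one_le)
  then show ?thesis using G_scale[OF hyps a, of t] by linarith
qed
lemma tf_mono1: "0 < \<alpha> \<Longrightarrow> \<alpha> \<le> 1 \<Longrightarrow> f (\<alpha> * t) * (\<alpha> * t) \<le> f t * t"
proof -
  assume a: "0 < \<alpha>" "\<alpha> \<le> 1"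
  have "(2 - \<mu>) * primF f (\<alpha> * t) \<le> (2 - \<mu>) * primF f t"
    using F_mono1[OF a] mu by (intro mult_left_mono) auto
  with G_mono1[OF a, of t] show ?thesis by (simp add: Gf_def)
qed

lemma alg4: "(x * (a * b) - c * d + e * (g * d + c * h)) / (k::real)
   = x * (b * a / k) - d * c / k + e * (d * g / k + c * h / k)"
  by (simp add: divide_inverse algebra_simps)

lemma exists_better:
  assumes a: "0 < a" "a \<le> b" and uP: "u \<in> pohozaev_set \<mu> f a"
  shows "\<exists>w \<in> pohozaev_set \<mu> f b. J_fun \<mu> f w \<le> J_fun \<mu> f u"
proof -
  have uH: "u \<in> H_half" and uL2: "(LINT x|lborel. (u x)\<^sup>2) = a\<^sup>2" and Pu: "P_fun \<mu> f u = 0"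
    using uP by (auto simp: pohozaev_set_def sphere_S_def)
  have [measurable]: "u \<in> borel_measurable borel" using uH by (simp add: H_half_def)
  have [measurable]: "primF f \<in> borel_measurable borel"
    using primF_cont[OF cont] by (rule borel_measurable_continuous_onI)
  have [measurable]: "f \<in> borel_measurable borel"
    using cont by (rule borel_measurable_continuous_onI)
  have [measurable]: "Gf \<mu> f \<in> borel_measurable borel"
    unfolding Gf_def[abs_def] by measurable
  define s where "s = frac_seminorm_sq u"
  have s_pos: "s > 0" unfolding s_def using frac_pos[OF uH uL2 a(1)] .
  define k where "k p = \<bar>fst p - snd p\<bar> powr \<mu>" for p :: "real \<times> real"
  have [measurable]: "k \<in> borel_measurable (lborel \<Otimes>\<^sub>M lborel)" unfolding k_def[abs_def] by measurable
  have kn: "0 \<le> k p" for p unfolding k_def by simp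
  define iF where "iF \<alpha> p = primF f (\<alpha> * u (snd p)) * primF f (\<alpha> * u (fst p)) / k p" for \<alpha> p
  define iT where "iT \<alpha> p = primF f (\<alpha> * u (snd p)) * (f (\<alpha> * u (fst p)) * (\<alpha> * u (fst p))) / k p" for \<alpha> p
  define iG where "iG \<alpha> p = primF f (\<alpha> * u (snd p)) * Gf \<mu> f (\<alpha> * u (fst p)) / k p" for \<alpha> p
  define iG' where "iG' p = primF f (u (fst p)) * Gf \<mu> f (u (snd p)) / k p" for p
  have [measurable]: "iF \<alpha> \<in> borel_measurable (lborel \<Otimes>\<^sub>M lborel)" for \<alpha> unfolding iF_def by measurable
  have [measurable]: "iT \<alpha> \<in> borel_measurable (lborel \<Otimes>\<^sub>M lborel)" for \<alpha> unfolding iT_def by measurable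
  have [measurable]: "iG \<alpha> \<in> borel_measurable (lborel \<Otimes>\<^sub>M lborel)" for \<alpha> unfolding iG_def by measurable
  have [measurable]: "iG' \<in> borel_measurable (lborel \<Otimes>\<^sub>M lborel)" unfolding iG'_def[abs_def] by measurable
  define cF where "cF \<alpha> = integral\<^sup>L (lborel \<Otimes>\<^sub>M lborel) (iF \<alpha>)" for \<alpha>
  define cT where "cT \<alpha> = integral\<^sup>L (lborel \<Otimes>\<^sub>M lborel) (iT \<alpha>)" for \<alpha>
  define D where "D \<alpha> = integral\<^sup>L (lborel \<Otimes>\<^sub>M lborel) (iG \<alpha>)" for \<alpha>
  have choqF: "choq_term \<mu> (\<lambda>x. primF f (\<alpha> * u x)) (\<lambda>x. primF f (\<alpha> * u x)) = cF \<alpha>" for \<alpha>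
    by (simp add: choq_term_def cF_def iF_def[abs_def] k_def)
  have choqT: "choq_term \<mu> (\<lambda>x. primF f (\<alpha> * u x)) (\<lambda>x. f (\<alpha> * u x) * (\<alpha> * u x)) = cT \<alpha>" for \<alpha>
    by (simp add: choq_term_def cT_def iT_def[abs_def] k_def)
  have iFn: "0 \<le> iF \<alpha> p" for \<alpha> p unfolding iF_def using Fn kn by simp
  have iTn: "0 \<le> iT \<alpha> p" for \<alpha> p unfolding iT_def using Fn kn tfn by simp
  have iGn: "0 \<le> iG \<alpha> p" for \<alpha> p unfolding iG_def using Fn kn Gn by simp
  have Pu': "s + (2 - \<mu>) * cF 1 - cT 1 = 0"
    using Pu choqF[of 1] choqT[of 1] by (simp add: P_fun_def s_def)
  have intT1: "integrable (lborel \<Otimes>\<^sub>M lborel) (iT 1)"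
  proof (rule ccontr)
    assume "\<not> ?thesis"
    then have "cT 1 = 0" by (simp add: cT_def not_integrable_integral_eq)
    moreover have "cF 1 \<ge> 0" unfolding cF_def using iFn by (simp add: integral_nonneg_AE)
    ultimately show False using Pu' s_pos mu by (smt (verit) mult_nonneg_nonneg)
  qed
  have bF: "iF \<alpha> p \<le> iT 1 p / \<theta>" if "0 < \<alpha>" "\<alpha> \<le> 1" for \<alpha> p
  proof -
    have "primF f (\<alpha> * u (snd p)) * primF f (\<alpha> * u (fst p)) \<le> primF f (u (snd p)) * (f (u (fst p)) * u (fst p) / \<theta>)"
      using F_mono1[OF that] F_le_tf Fn by (meson mult_mono order_trans)
    then have "primF f (\<alpha> * u (snd p)) * primF f (\<alpha> * u (fst p)) / k p \<le> primF f (u (snd p)) * (f (u (fst p)) * u (fst p) / \<theta>) / k p"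
      using kn[of p] by (rule divide_right_mono)
    then show ?thesis unfolding iF_def iT_def by (simp add: field_simps)
  qed
  have bT: "iT \<alpha> p \<le> iT 1 p" if "0 < \<alpha>" "\<alpha> \<le> 1" for \<alpha> p
  proof -
    have "primF f (\<alpha> * u (snd p)) * (f (\<alpha> * u (fst p)) * (\<alpha> * u (fst p))) \<le> primF f (u (snd p)) * (f (u (fst p)) * u (fst p))"
      using F_mono1[OF that] tf_mono1[OF that] Fn tfn by (meson mult_mono order_trans)
    then show ?thesis unfolding iT_def using kn[of p]
      by (simp add: divide_right_mono)
  qed
  have bG: "iG \<alpha> p \<le> iT 1 p" if "0 < \<alpha>" "\<alpha> \<le> 1" for \<alpha> p
  proof -
    have "primF f (\<alpha> * u (snd p)) * Gf \<mu> f (\<alpha> * u (fst p)) \<le> primF f (u (snd p)) * (f (u (fst p)) * u (fst p))"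
      using F_mono1[OF that] G_mono1[OF that] G_le_tf Fn Gn by (meson mult_mono order_trans)
    then show ?thesis unfolding iT_def iG_def using kn[of p]
      by (simp add: divide_right_mono)
  qed
  have intF: "integrable (lborel \<Otimes>\<^sub>M lborel) (iF \<alpha>)" if "0 < \<alpha>" "\<alpha> \<le> 1" for \<alpha>
  proof -
    have "integrable (lborel \<Otimes>\<^sub>M lborel) (\<lambda>p. iT 1 p / \<theta>)" using intT1 by simp
    then show ?thesis
      by (rule Bochner_Integration.integrable_bound) (use bF[OF that] iFn iTn th mu in \<open>auto intro!: AE_I2\<close>)
  qed
  have intT: "integrable (lborel \<Otimes>\<^sub>M lborel) (iT \<alpha>)" if "0 < \<alpha>" "\<alpha> \<le> 1" for \<alpha>
    by (rule Bochner_Integration.integrable_bound[OF intT1]) (use bT[OF that] iTn in \<open>auto intro!: AE_I2\<close>)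
  have intG: "integrable (lborel \<Otimes>\<^sub>M lborel) (iG \<alpha>)" if "0 < \<alpha>" "\<alpha> \<le> 1" for \<alpha>
    by (rule Bochner_Integration.integrable_bound[OF intT1]) (use bG[OF that] iGn iTn in \<open>auto intro!: AE_I2\<close>)
  have D_eq: "D \<alpha> = cT \<alpha> - (2 - \<mu>) * cF \<alpha>" if "0 < \<alpha>" "\<alpha> \<le> 1" for \<alpha>
  proof -
    have "iG \<alpha> = (\<lambda>p. iT \<alpha> p - (2 - \<mu>) * iF \<alpha> p)"
    proof
      fix p show "iG \<alpha> p = iT \<alpha> p - (2 - \<mu>) * iF \<alpha> p"
        unfolding iG_def iT_def iF_def Gf_def
        by (cases "k p = 0") (simp_all add: field_simps)
    qed
    then show ?thesis unfolding D_def cT_def cF_def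
      using intT[OF that] intF[OF that] by simp
  qed
  have D1: "D 1 = s" using D_eq[of 1] Pu' by simp
  have D_le: "D \<alpha> \<le> \<alpha> powr (\<theta> + (3 - \<mu>)) * s" if a1: "0 < \<alpha>" "\<alpha> \<le> 1" for \<alpha>
  proof -
    have "iG \<alpha> p \<le> \<alpha> powr (\<theta> + (3 - \<mu>)) * iG 1 p" for p
    proof -
      have "primF f (\<alpha> * u (snd p)) * Gf \<mu> f (\<alpha> * u (fst p))
          \<le> (\<alpha> powr \<theta> * primF f (u (snd p))) * (\<alpha> powr (3 - \<mu>) * Gf \<mu> f (u (fst p)))"
        by (intro mult_mono F_scale[OF hyps a1] G_scale[OF hyps a1] Fn Gn) (auto intro: mult_nonneg_nonneg Fn Gn)
      then have "iG \<alpha> p \<le> (\<alpha> powr \<theta> * primF f (u (snd p))) * (\<alpha> powr (3 - \<mu>) * Gf \<mu> f (u (fst p))) / k p"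
        unfolding iG_def using kn[of p] by (rule divide_right_mono)
      also have "\<dots> = \<alpha> powr (\<theta> + (3 - \<mu>)) * iG 1 p"
      proof -
        have "\<alpha> powr (\<theta> + (3 - \<mu>)) = \<alpha> powr \<theta> * \<alpha> powr (3 - \<mu>)" by (rule powr_add)
        then show ?thesis unfolding iG_def by simp
      qed
      finally show ?thesis .
    qed
    then have "D \<alpha> \<le> integral\<^sup>L (lborel \<Otimes>\<^sub>M lborel) (\<lambda>p. \<alpha> powr (\<theta> + (3 - \<mu>)) * iG 1 p)"
      unfolding D_def by (intro integral_mono intG a1) (auto intro: intG)
    also have "\<dots> = \<alpha> powr (\<theta> + (3 - \<mu>)) * s" using D1 by (simp add: D_def)
    finally show ?thesis .
  qed
  have eqsw: "(\<lambda>(x,y). iG 1 (y,x)) = iG'"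
    by (auto simp: iG'_def iG_def k_def abs_minus_commute)
  have swap: "integral\<^sup>L (lborel \<Otimes>\<^sub>M lborel) iG' = s"
  proof -
    have "integral\<^sup>L (lborel \<Otimes>\<^sub>M lborel) iG' = (\<integral>(x,y). iG 1 (y,x) \<partial>(lborel \<Otimes>\<^sub>M lborel))"
      by (simp only: eqsw)
    also have "\<dots> = integral\<^sup>L (lborel \<Otimes>\<^sub>M lborel) (iG 1)"
      by (rule lborel_pair.integral_product_swap) measurable
    finally show ?thesis using D1 by (simp add: D_def)
  qed
  have intG': "integrable (lborel \<Otimes>\<^sub>M lborel) iG'"
  proof -
    have "integrable (lborel \<Otimes>\<^sub>M lborel) (\<lambda>(x,y). iG 1 (y,x))"
      using lborel_pair.integrable_product_swap[OF intG[of 1]] by simp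
    moreover have "(\<lambda>(x,y). iG 1 (y,x)) = iG'"
      by (auto simp: iG'_def iG_def k_def abs_minus_commute)
    ultimately show ?thesis by simp
  qed
  have key: "0 \<le> \<alpha> powr (2 * \<mu> - 4) * cF \<alpha> - cF 1 + (1 - \<alpha>\<^sup>2) * s" if a1: "0 < \<alpha>" "\<alpha> \<le> 1" for \<alpha>
  proof -
    have pw: "0 \<le> \<alpha> powr (2 * \<mu> - 4) * iF \<alpha> p - iF 1 p + (1 - \<alpha>\<^sup>2) / 2 * (iG 1 p + iG' p)" for p
    proof -
      have "0 \<le> (\<alpha> powr (2 * \<mu> - 4) * (primF f (\<alpha> * u (fst p)) * primF f (\<alpha> * u (snd p))) - primF f (u (fst p)) * primF f (u (snd p))
          + (1 - \<alpha>\<^sup>2) / 2 * (Gf \<mu> f (u (fst p)) * primF f (u (snd p)) + primF f (u (fst p)) * Gf \<mu> f (u (snd p)))) / k p"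
        using key_pointwise[OF hyps a1] kn by simp
      also have "\<dots> = \<alpha> powr (2 * \<mu> - 4) * iF \<alpha> p - iF 1 p + (1 - \<alpha>\<^sup>2) / 2 * (iG 1 p + iG' p)"
        unfolding iF_def iG_def iG'_def mult_1_left by (rule alg4)
      finally show ?thesis .
    qed
    have "0 \<le> integral\<^sup>L (lborel \<Otimes>\<^sub>M lborel) (\<lambda>p. \<alpha> powr (2 * \<mu> - 4) * iF \<alpha> p - iF 1 p + (1 - \<alpha>\<^sup>2) / 2 * (iG 1 p + iG' p))"
      using pw by (simp add: integral_nonneg_AE)
    also have "\<dots> = \<alpha> powr (2 * \<mu> - 4) * cF \<alpha> - cF 1 + (1 - \<alpha>\<^sup>2) / 2 * (D 1 + integral\<^sup>L (lborel \<Otimes>\<^sub>M lborel) iG')"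
      using intF[OF a1] intF[of 1] intG[of 1] intG' unfolding cF_def D_def by simp
    also have "\<dots> = \<alpha> powr (2 * \<mu> - 4) * cF \<alpha> - cF 1 + (1 - \<alpha>\<^sup>2) * s"
      using D1 swap by simp
    finally show ?thesis .
  qed
  have Dcont: "continuous_on {\<epsilon>..1} D" if "0 < \<epsilon>" for \<epsilon>
    unfolding D_def
  proof (rule cont_param_int[where w="iT 1"])
    show "iG \<alpha> \<in> borel_measurable (lborel \<Otimes>\<^sub>M lborel)" for \<alpha> by measurable
    show "integrable (lborel \<Otimes>\<^sub>M lborel) (iT 1)" by (rule intT1)
    show "\<bar>iG \<alpha> p\<bar> \<le> iT 1 p" if "\<alpha> \<in> {\<epsilon>..1}" for \<alpha> p
      using bG[of \<alpha> p] iGn[of \<alpha> p] that \<open>0 < \<epsilon>\<close> by simp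
    show "continuous_on {\<epsilon>..1} (\<lambda>\<alpha>. iG \<alpha> p)" for p
      unfolding iG_def Gf_def divide_inverse
      by (intro continuous_intros continuous_on_compose2[OF primF_cont[OF cont]]
          continuous_on_compose2[OF cont]) auto
  qed
  define Kc where "Kc = ((a / b)\<^sup>2) powr (\<mu> - 2)"
  have ab: "0 < (a / b)\<^sup>2" "(a / b)\<^sup>2 \<le> 1" using a by (auto simp: power_le_one)
  have Kc1: "1 \<le> Kc"
    using powr_mono2'[of "\<mu> - 2" "(a / b)\<^sup>2" 1] ab mu unfolding Kc_def by simp
  define \<phi> where "\<phi> \<alpha> = \<alpha>\<^sup>2 * s - Kc * \<alpha> powr (2 * \<mu> - 4) * D \<alpha>" for \<alpha>
  define e where "e = \<theta> + \<mu> - 3"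
  have e0: "0 < e" using th unfolding e_def by simp
  define \<epsilon> where "\<epsilon> = min 1 ((1 / (2 * Kc)) powr (1 / e))"
  have eps: "0 < \<epsilon>" "\<epsilon> \<le> 1" using Kc1 unfolding \<epsilon>_def by auto
  have epse: "\<epsilon> powr e \<le> 1 / (2 * Kc)"
  proof -
    have "\<epsilon> powr e \<le> ((1 / (2 * Kc)) powr (1 / e)) powr e"
      using eps e0 unfolding \<epsilon>_def by (intro powr_mono2) auto
    also have "\<dots> = 1 / (2 * Kc)" using e0 Kc1 by (simp add: powr_powr)
    finally show ?thesis .
  qed
  have phi_eps: "0 \<le> \<phi> \<epsilon>"
  proof -
    have "Kc * \<epsilon> powr (2 * \<mu> - 4) * D \<epsilon> \<le> Kc * \<epsilon> powr (2 * \<mu> - 4) * (\<epsilon> powr (\<theta> + (3 - \<mu>)) * s)"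
      using D_le[OF eps] Kc1 by (intro mult_left_mono) auto
    also have "\<dots> = Kc * (\<epsilon> powr (2 * \<mu> - 4) * \<epsilon> powr (\<theta> + (3 - \<mu>))) * s" by simp
    also have "\<epsilon> powr (2 * \<mu> - 4) * \<epsilon> powr (\<theta> + (3 - \<mu>)) = \<epsilon> powr 2 * \<epsilon> powr e"
      unfolding e_def by (simp only: powr_add[symmetric]) (simp add: algebra_simps)
    also have "\<epsilon> powr 2 = \<epsilon>\<^sup>2" using eps by (simp add: powr_numeral)
    also have "Kc * (\<epsilon>\<^sup>2 * \<epsilon> powr e) * s \<le> Kc * (\<epsilon>\<^sup>2 * (1 / (2 * Kc))) * s"
      using epse Kc1 s_pos by (intro mult_right_mono mult_left_mono) auto
    also have "\<dots> = \<epsilon>\<^sup>2 * s / 2" using Kc1 by simp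
    finally have "Kc * \<epsilon> powr (2 * \<mu> - 4) * D \<epsilon> \<le> \<epsilon>\<^sup>2 * s / 2" .
    moreover have "0 \<le> \<epsilon>\<^sup>2 * s" using s_pos by simp
    ultimately show ?thesis unfolding \<phi>_def by linarith
  qed
  have phi1: "\<phi> 1 \<le> 0"
    using D1 Kc1 s_pos unfolding \<phi>_def by (simp add: mult_le_cancel_right1)
  have phicont: "continuous_on {\<epsilon>..1} \<phi>"
    unfolding \<phi>_def using eps Dcont[OF eps(1)]
    by (intro continuous_intros) auto
  obtain \<alpha> where al: "\<epsilon> \<le> \<alpha>" "\<alpha> \<le> 1" "\<phi> \<alpha> = 0"
    using IVT2'[of \<phi> 1 0 \<epsilon>, OF phi1 phi_eps eps(2) phicont] by blast
  have a0: "0 < \<alpha>" using al eps by simp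
  define \<beta> where "\<beta> = \<alpha>\<^sup>2 * (a / b)\<^sup>2"
  have b0: "0 < \<beta>" using a0 ab unfolding \<beta>_def by simp
  have bp: "\<beta> powr (\<mu> - 2) = Kc * \<alpha> powr (2 * \<mu> - 4)"
  proof -
    have "\<beta> powr (\<mu> - 2) = (\<alpha> powr 2) powr (\<mu> - 2) * Kc"
      unfolding \<beta>_def Kc_def using a0 ab by (simp add: powr_mult powr_numeral)
    also have "(\<alpha> powr 2) powr (\<mu> - 2) = \<alpha> powr (2 * \<mu> - 4)"
      by (simp add: powr_powr algebra_simps)
    finally show ?thesis by simp
  qed
  define w where "w x = \<alpha> * u (\<beta> * x)" for x
  have wdef: "w = (\<lambda>x. \<alpha> * u (\<beta> * x))" unfolding w_def ..
  have [measurable]: "w \<in> borel_measurable borel" unfolding wdef by measurable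
  have iu: "integrable lborel (\<lambda>x. (u x)\<^sup>2)" using uH by (simp add: H_half_def)
  have iub: "integrable lborel (\<lambda>x. (u (\<beta> * x))\<^sup>2)"
    using lborel_integrable_real_affine_iff[of \<beta> "\<lambda>x. (u x)\<^sup>2" 0] b0 iu by simp
  have wH: "w \<in> H_half"
  proof -
    have "integrable lborel (\<lambda>x. (w x)\<^sup>2)"
      using iub unfolding wdef by (simp add: power_mult_distrib)
    moreover have "gagl_nn w < \<infinity>"
      using uH gagl_scale[OF b0, of u \<alpha>] unfolding wdef H_half_def by (simp add: ennreal_mult_less_top)
    ultimately show ?thesis unfolding H_half_def by simp
  qed
  have wL2: "(LINT x|lborel. (w x)\<^sup>2) = b\<^sup>2"
  proof -
    have "a\<^sup>2 = \<beta> * (LINT x|lborel. (u (\<beta> * x))\<^sup>2)"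
      using lborel_integral_real_affine[of \<beta> "\<lambda>x. (u x)\<^sup>2" 0] b0 uL2 by simp
    moreover have "(LINT x|lborel. (w x)\<^sup>2) = \<alpha>\<^sup>2 * (LINT x|lborel. (u (\<beta> * x))\<^sup>2)"
      unfolding wdef by (simp add: power_mult_distrib)
    ultimately show ?thesis using a0 a b0 unfolding \<beta>_def by (simp add: field_simps)
  qed
  have fracw: "frac_seminorm_sq w = \<alpha>\<^sup>2 * s"
    unfolding wdef s_def by (rule frac_scale[OF b0]) measurable
  have choqFw: "choq_term \<mu> (\<lambda>x. primF f (w x)) (\<lambda>x. primF f (w x)) = \<beta> powr (\<mu> - 2) * cF \<alpha>"
    using choq_scale[OF b0, of "\<lambda>x. primF f (\<alpha> * u x)" "\<lambda>x. primF f (\<alpha> * u x)" \<mu>] choqF[of \<alpha>]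
    unfolding wdef by simp
  have choqTw: "choq_term \<mu> (\<lambda>x. primF f (w x)) (\<lambda>x. f (w x) * w x) = \<beta> powr (\<mu> - 2) * cT \<alpha>"
    using choq_scale[OF b0, of "\<lambda>x. primF f (\<alpha> * u x)" "\<lambda>x. f (\<alpha> * u x) * (\<alpha> * u x)" \<mu>] choqT[of \<alpha>]
    unfolding wdef by simp
  have Pw: "P_fun \<mu> f w = 0"
  proof -
    have "P_fun \<mu> f w = \<alpha>\<^sup>2 * s - \<beta> powr (\<mu> - 2) * (cT \<alpha> - (2 - \<mu>) * cF \<alpha>)"
      unfolding P_fun_def fracw choqFw choqTw by (simp add: algebra_simps)
    also have "\<dots> = \<phi> \<alpha>" unfolding \<phi>_def bp D_eq[OF a0 al(2)] by (simp add: mult.assoc)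
    finally show ?thesis using al by simp
  qed
  have wP: "w \<in> pohozaev_set \<mu> f b"
    using wH wL2 Pw unfolding pohozaev_set_def sphere_S_def by simp
  have Jw: "J_fun \<mu> f w = \<alpha>\<^sup>2 * s / 2 - Kc * (\<alpha> powr (2 * \<mu> - 4) * cF \<alpha>) / 2"
    unfolding J_fun_def fracw choqFw bp by (simp add: mult.assoc)
  have Ju: "J_fun \<mu> f u = s / 2 - cF 1 / 2"
    using choqF[of 1] unfolding J_fun_def s_def by simp
  have cFn: "0 \<le> cF \<alpha>" unfolding cF_def using iFn by (simp add: integral_nonneg_AE)
  have "\<alpha> powr (2 * \<mu> - 4) * cF \<alpha> \<le> Kc * (\<alpha> powr (2 * \<mu> - 4) * cF \<alpha>)"
  proof -
    have "0 \<le> \<alpha> powr (2 * \<mu> - 4) * cF \<alpha>" using cFn by simp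
    from mult_right_mono[OF Kc1 this] show ?thesis by simp
  qed
  then have "J_fun \<mu> f w \<le> J_fun \<mu> f u"
    unfolding Jw Ju using key[OF a0 al(2)] by (simp add: algebra_simps)
  with wP show ?thesis by blast
qed

end

theorem lemma5p1:
  fixes \<mu> :: real and f :: "real \<Rightarrow> real"
  assumes mu: "0 < \<mu>" "\<mu> < 1"
    and cont: "continuous_on UNIV f"
    and f1: "\<exists>\<kappa>>2 - \<mu>. ((\<lambda>t. \<bar>f t\<bar> / \<bar>t\<bar> powr \<kappa>) \<longlongrightarrow> 0) (at 0)"
    and f2a: "\<forall>\<alpha>>pi. ((\<lambda>t. \<bar>f t\<bar> * exp (- \<alpha> * t\<^sup>2)) \<longlongrightarrow> 0) at_infinity"
    and f2b: "\<forall>\<alpha>. 0 < \<alpha> \<and> \<alpha> < pi \<longrightarrow> filterlim (\<lambda>t. \<bar>f t\<bar> * exp (- \<alpha> * t\<^sup>2)) at_top at_infinity"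
    and f3: "\<exists>\<theta>>3 - \<mu>. \<forall>t. t \<noteq> 0 \<longrightarrow> 0 < \<theta> * primF f t \<and> \<theta> * primF f t \<le> t * f t"
    and f5: "\<forall>s t. s < t \<and> t < 0 \<longrightarrow>
               (f t * t - (2 - \<mu>) * primF f t) / \<bar>t\<bar> powr (3 - \<mu>)
                 \<le> (f s * s - (2 - \<mu>) * primF f s) / \<bar>s\<bar> powr (3 - \<mu>)"
            "\<forall>s t. 0 < s \<and> s < t \<longrightarrow>
               (f s * s - (2 - \<mu>) * primF f s) / \<bar>s\<bar> powr (3 - \<mu>)
                 \<le> (f t * t - (2 - \<mu>) * primF f t) / \<bar>t\<bar> powr (3 - \<mu>)"
  shows "\<forall>a b. 0 < a \<and> a \<le> b \<longrightarrow> m_level \<mu> f b \<le> m_level \<mu> f a"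
proof (intro allI impI)
  fix a b :: real assume ab: "0 < a \<and> a \<le> b"
  from f3 obtain \<theta> where th: "\<theta> > 3 - \<mu>"
    and f3': "\<forall>t. t \<noteq> 0 \<longrightarrow> 0 < \<theta> * primF f t \<and> \<theta> * primF f t \<le> t * f t" by blast
  show "m_level \<mu> f b \<le> m_level \<mu> f a"
    unfolding m_level_def
  proof (rule INF_greatest)
    fix u assume "u \<in> pohozaev_set \<mu> f a"
    then obtain w where w: "w \<in> pohozaev_set \<mu> f b" "J_fun \<mu> f w \<le> J_fun \<mu> f u"
      using exists_better[OF mu cont th f3' f5(1) f5(2), of a b u] ab by blast
    then show "(INF v \<in> pohozaev_set \<mu> f b. ereal (J_fun \<mu> f v)) \<le> ereal (J_fun \<mu> f u)"
      by (intro INF_lower2[OF w(1)]) simp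
  qed
qed

end
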